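(* Let $P_1,P_2$ be probability measures on $(\Omega,\mathcal A)$, let $\delta_1,\delta_2\in(\tfrac12,1)$, and let $\bar{\mathbf C}\subseteq\bar{\mathcal A}$ be a C-class. If $\bar T(P_1,\delta_1)\cup\bar T(P_2,\delta_2)\subseteq\bar{\mathbf C}$, then $P_1=P_2$.
   Context: Let $(\Omega,\mathcal A)$ be a measurable space. For $n\ge1$, $\mathcal A^n$ is the product $\sigma$-algebra on $\Omega^n$; the extended event space is $\bar{\mathcal A}=\bigcup_{n\ge1}\mathcal A^n$, events tagged by their level $n$. For a probability measure $P$ on $\mathcal A$, $P^n$ is its $n$-fold product, $\bar P(A^{(n)})=P^n(A^{(n)})$ for $A^{(n)}\in\mathcal A^n$, and $\bar T(P,\delta)=\{A\in\bar{\mathcal A}:\bar P(A)\ge\delta\}$. A class $\bar{\mathbf C}\subseteq\bar{\mathcal A}$ is a C-class if for every $n\ge1$ the component $\mathcal C^{(n)}=\bar{\mathbf C}\cap\mathcal A^n$ satisfies: $\Omega^n\in\mathcal C^{(n)}$; if $A\in\mathcal C^{(n)}$, $B\in\mathcal A^n$, $A\subseteq B$ then $B\in\mathcal C^{(n)}$; $\mathcal C^{(n)}$ contains no two disjoint events. *)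

theory Defs
  imports "HOL-Probability.Probability"
begin

abbreviation pow_measure :: "'a measure \<Rightarrow> nat \<Rightarrow> (nat \<Rightarrow> 'a) measure" where
  "pow_measure M n \<equiv> PiM {..<n} (\<lambda>_. M)"

definition ext_events :: "'a measure \<Rightarrow> (nat \<times> (nat \<Rightarrow> 'a) set) set" where
  "ext_events M = {(n, A). n \<ge> 1 \<and> A \<in> sets (pow_measure M n)}"

definition T_bar :: "'a measure \<Rightarrow> real \<Rightarrow> (nat \<times> (nat \<Rightarrow> 'a) set) set" where
  "T_bar P \<delta> = {(n, A). (n, A) \<in> ext_events P \<and> measure (pow_measure P n) A \<ge> \<delta>}"

definition C_class :: "'a measure \<Rightarrow> (nat \<times> (nat \<Rightarrow> 'a) set) set \<Rightarrow> bool" where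
  "C_class M C \<longleftrightarrow> C \<subseteq> ext_events M \<and>
     (\<forall>n\<ge>1. (n, space (pow_measure M n)) \<in> C \<and>
        (\<forall>A B. (n, A) \<in> C \<and> B \<in> sets (pow_measure M n) \<and> A \<subseteq> B \<longrightarrow> (n, B) \<in> C) \<and>
        (\<forall>A B. (n, A) \<in> C \<and> (n, B) \<in> C \<longrightarrow> A \<inter> B \<noteq> {}))"

end

theory Submission
  imports Defs
begin

lemma pair_meas:
  assumes P: "prob_space P" and A: "A \<in> sets P" and i: "i < n" and j: "j < n"
  shows "measure (PiM {..<n} (\<lambda>_. P)) {x\<in>space (PiM {..<n} (\<lambda>_. P)). x i \<in> A \<and> x j \<in> A}
     = (if i = j then measure P A else measure P A ^ 2)"
proof -
  interpret prob_space P by fact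
  let ?Q = "PiM {..<n} (\<lambda>_. P)"
  have eq: "{x\<in>space ?Q. x i \<in> A \<and> x j \<in> A} = prod_emb {..<n} (\<lambda>_. P) {i,j} (PiE {i,j} (\<lambda>_. A))"
    using i j by (auto simp: prod_emb_def PiE_iff space_PiM extensional_def)
  have "emeasure ?Q {x\<in>space ?Q. x i \<in> A \<and> x j \<in> A} = (\<Prod>k\<in>{i,j}. emeasure P A)"
    unfolding eq using P A i j by (intro emeasure_PiM_emb) auto
  also have "\<dots> = ennreal (if i = j then measure P A else measure P A ^ 2)"
    using emeasure_eq_measure
    by (auto simp: power2_eq_square ennreal_mult)
  finally show ?thesis unfolding measure_def by simp
qed

lemma conc:
  assumes P: "prob_space P" and A[measurable]: "A \<in> sets P" and n: "n > 0" and e: "e > 0"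
  shows "measure (PiM {..<n} (\<lambda>_. P))
     {x\<in>space (PiM {..<n} (\<lambda>_. P)). \<bar>(\<Sum>i<n. indicator A (x i)) - real n * measure P A\<bar> \<ge> real n * e}
     \<le> 1 / (real n * e^2)"
proof -
  let ?Q = "PiM {..<n} (\<lambda>_. P)"
  let ?p = "measure P A"
  define S where "S x = (\<Sum>i<n. indicator A (x i) :: real)" for x :: "nat \<Rightarrow> _"
  interpret Q: prob_space ?Q using P by (intro prob_space_PiM) auto
  interpret P: prob_space P by fact
  have Sm[measurable]: "S \<in> borel_measurable ?Q" unfolding S_def by measurable
  have ind_int: "integrable ?Q (\<lambda>x. indicator A (x i) * indicator A (x j) :: real)" if "i < n" "j < n" for i j
    by (rule Q.integrable_const_bound[where B=1]) (use that in \<open>auto simp: indicator_def\<close>)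
  have ind_exp: "Q.expectation (\<lambda>x. indicator A (x i) * indicator A (x j) :: real)
       = (if i = j then ?p else ?p ^ 2)" if "i < n" "j < n" for i j
  proof -
    have "Q.expectation (\<lambda>x. indicator A (x i) * indicator A (x j) :: real)
        = Q.expectation (indicator {x\<in>space ?Q. x i \<in> A \<and> x j \<in> A})"
      by (intro Bochner_Integration.integral_cong) (auto simp: indicator_def)
    also have "\<dots> = measure ?Q {x\<in>space ?Q. x i \<in> A \<and> x j \<in> A}"
      by (simp add: Int_absorb2 subset_eq)
    also have "\<dots> = (if i = j then ?p else ?p ^ 2)" using pair_meas[OF P A that] .
    finally show ?thesis .
  qed
  have ES: "Q.expectation S = real n * ?p"
  proof -
    have "Q.expectation S = (\<Sum>i<n. Q.expectation (\<lambda>x. indicator A (x i) * indicator A (x i) :: real))"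
    proof -
      have "Q.expectation S = Q.expectation (\<lambda>x. \<Sum>i<n. indicator A (x i) * indicator A (x i) :: real)"
        unfolding S_def by (intro Bochner_Integration.integral_cong) (auto simp: indicator_def)
      also have "\<dots> = (\<Sum>i<n. Q.expectation (\<lambda>x. indicator A (x i) * indicator A (x i) :: real))"
        by (intro Bochner_Integration.integral_sum ind_int) auto
      finally show ?thesis .
    qed
    also have "\<dots> = (\<Sum>i<n. ?p)" by (intro sum.cong) (auto simp: ind_exp)
    finally show ?thesis by simp
  qed
  have S2: "(S x)^2 = (\<Sum>i<n. \<Sum>j<n. indicator A (x i) * indicator A (x j))" for x
    unfolding S_def power2_eq_square by (simp add: sum_product)
  have S2int: "integrable ?Q (\<lambda>x. (S x)^2)"
    unfolding S2 by (intro Bochner_Integration.integrable_sum ind_int) auto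
  have ES2: "Q.expectation (\<lambda>x. (S x)^2) = real n * (real n * ?p^2) + real n * (?p - ?p^2)"
  proof -
    have "Q.expectation (\<lambda>x. (S x)^2) = (\<Sum>i<n. \<Sum>j<n. (if i = j then ?p else ?p ^ 2))"
      unfolding S2
      apply (subst Bochner_Integration.integral_sum)
       apply (intro Bochner_Integration.integrable_sum ind_int; simp)
      apply (intro sum.cong refl)
      apply (subst Bochner_Integration.integral_sum)
       apply (intro ind_int; simp)
      apply (intro sum.cong refl)
      apply (simp add: ind_exp del: indicator_simps)
      done
    also have "\<dots> = (\<Sum>i<n. \<Sum>j<n. ?p^2 + (if i = j then ?p - ?p^2 else 0))"
      by (intro sum.cong) auto
    also have "\<dots> = (\<Sum>i<n. real n * ?p^2 + (?p - ?p^2))"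
      by (intro sum.cong) (auto simp: sum.distrib)
    also have "\<dots> = real n * (real n * ?p^2) + real n * (?p - ?p^2)"
      by (simp add: distrib_left)
    finally show ?thesis .
  qed
  have var: "Q.variance S = real n * (?p - ?p^2)"
  proof -
    have Sint: "integrable ?Q S"
      by (rule Q.integrable_const_bound[where B="real n"])
        (auto simp: S_def intro!: order.trans[OF sum_abs] order.trans[OF sum_bounded_above[where K=1]])
    show ?thesis
      by (subst Q.variance_eq[OF Sint S2int], subst ES2, subst ES) (simp add: power2_eq_square algebra_simps)
  qed
  have pp: "?p - ?p^2 \<le> 1"
    using P.prob_le_1[of A] measure_nonneg[of P A] zero_le_power2[of ?p] by linarith
  have "Q.prob {x\<in>space ?Q. \<bar>S x - Q.expectation S\<bar> \<ge> real n * e} \<le> Q.variance S / (real n * e)^2"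
    using n e by (intro Q.Chebyshev_inequality Sm S2int) auto
  also have "\<dots> \<le> 1 / (real n * e^2)"
  proof -
    have "Q.variance S / (real n * e)^2 = (?p - ?p^2) / (real n * e^2)"
      using n by (subst var) (simp add: power2_eq_square)
    also have "\<dots> \<le> 1 / (real n * e^2)" using n e pp
      by (intro divide_right_mono) auto
    finally show ?thesis .
  qed
  finally show ?thesis unfolding ES S_def .
qed

lemma conc_lo:
  assumes P: "prob_space P" and A[measurable]: "A \<in> sets P" and n: "n > 0" and e: "e > 0"
  shows "measure (PiM {..<n} (\<lambda>_. P))
     {x\<in>space (PiM {..<n} (\<lambda>_. P)). (\<Sum>i<n. indicator A (x i)) < real n * (measure P A + e)}
     \<ge> 1 - 1 / (real n * e^2)"
    and "measure (PiM {..<n} (\<lambda>_. P))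
     {x\<in>space (PiM {..<n} (\<lambda>_. P)). (\<Sum>i<n. indicator A (x i)) > real n * (measure P A - e)}
     \<ge> 1 - 1 / (real n * e^2)"
proof -
  let ?Q = "PiM {..<n} (\<lambda>_. P)"
  let ?S = "\<lambda>x. (\<Sum>i<n. indicator A (x i)) :: real"
  let ?B = "{x\<in>space ?Q. \<bar>?S x - real n * measure P A\<bar> \<ge> real n * e}"
  interpret Q: prob_space ?Q using P by (intro prob_space_PiM) auto
  have B: "?B \<in> sets ?Q" by measurable
  have cB: "Q.prob (space ?Q - ?B) \<ge> 1 - 1 / (real n * e^2)"
    using Q.prob_compl[OF B] conc[OF P A n e] by simp
  show "measure ?Q {x\<in>space ?Q. ?S x < real n * (measure P A + e)} \<ge> 1 - 1 / (real n * e^2)"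
    apply (rule order.trans[OF cB])
    apply (rule Q.finite_measure_mono)
     apply (auto simp: distrib_left)[1]
    apply measurable
    done
  show "measure ?Q {x\<in>space ?Q. ?S x > real n * (measure P A - e)} \<ge> 1 - 1 / (real n * e^2)"
    apply (rule order.trans[OF cB])
    apply (rule Q.finite_measure_mono)
     apply (auto simp: right_diff_distrib)[1]
    apply measurable
    done
qed


lemma sep:
  fixes M Pa Pb :: "'a measure" and da db :: real
    and C :: "(nat \<times> (nat \<Rightarrow> 'a) set) set"
  assumes Pa: "prob_space Pa" and Pb: "prob_space Pb"
    and sa: "sets Pa = sets M" and sb: "sets Pb = sets M"
    and "da < 1" and "db < 1"
    and CC: "C_class M C"
    and sub: "T_bar Pa da \<union> T_bar Pb db \<subseteq> C"
    and A: "A \<in> sets M" and lt: "measure Pa A < measure Pb A"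
  shows False
proof -
  define e where "e = (measure Pb A - measure Pa A) / 2"
  define k where "k = min (1 - da) (1 - db)"
  have e: "e > 0" using lt by (simp add: e_def)
  have k: "k > 0" using assms by (simp add: k_def)
  obtain n :: nat where nlarge: "real n > 1 / (e^2 * k)" using reals_Archimedean2 by blast
  have "1 / (e^2 * k) > 0" using e k by simp
  hence "real n > 0" using nlarge by linarith
  hence n: "n > 0" by simp
  have small: "1 / (real n * e^2) \<le> k"
  proof -
    have "1 / (e^2 * k) * (e^2 * k) < real n * (e^2 * k)"
      using nlarge e k by (intro mult_strict_right_mono) auto
    hence "1 < real n * e^2 * k" using e k by (simp add: mult.assoc)
    thus ?thesis using n e k by (simp add: divide_le_eq mult.commute mult.left_commute)
  qed
  have Aa[measurable]: "A \<in> sets Pa" and Ab[measurable]: "A \<in> sets Pb" using A sa sb by auto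
  let ?S = "\<lambda>x. (\<Sum>i<n. indicator A (x i)) :: real"
  let ?t = "real n * (measure Pa A + e)"
  have t2: "real n * (measure Pb A - e) = ?t" by (simp add: e_def algebra_simps)
  define E1 where "E1 = {x\<in>space (pow_measure Pa n). ?S x < ?t}"
  define E2 where "E2 = {x\<in>space (pow_measure Pb n). ?S x > ?t}"
  have setsa: "sets (pow_measure Pa n) = sets (pow_measure M n)"
    using sa by (intro sets_PiM_cong) auto
  have setsb: "sets (pow_measure Pb n) = sets (pow_measure M n)"
    using sb by (intro sets_PiM_cong) auto
  have E1s: "E1 \<in> sets (pow_measure Pa n)" unfolding E1_def by measurable
  have E2s: "E2 \<in> sets (pow_measure Pb n)" unfolding E2_def by measurable
  have m1: "measure (pow_measure Pa n) E1 \<ge> da"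
    using conc_lo(1)[OF Pa Aa n e] small unfolding E1_def k_def by linarith
  have m2: "measure (pow_measure Pb n) E2 \<ge> db"
    using conc_lo(2)[OF Pb Ab n e] small unfolding E2_def k_def t2 by linarith
  have "(n, E1) \<in> T_bar Pa da" using n E1s m1 by (simp add: T_bar_def ext_events_def)
  hence c1: "(n, E1) \<in> C" using sub by auto
  have "(n, E2) \<in> T_bar Pb db" using n E2s m2 by (simp add: T_bar_def ext_events_def)
  hence c2: "(n, E2) \<in> C" using sub by auto
  have "\<forall>A B. (n, A) \<in> C \<and> (n, B) \<in> C \<longrightarrow> A \<inter> B \<noteq> {}"
  proof -
    have "n \<ge> 1" using n by simp
    thus ?thesis using CC unfolding C_class_def by blast
  qed
  hence "E1 \<inter> E2 \<noteq> {}" using c1 c2 by blast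
  moreover have "E1 \<inter> E2 = {}" unfolding E1_def E2_def by auto
  ultimately show False by simp
qed

theorem mainTheorem6:
  fixes M P1 P2 :: "'a measure" and \<delta>1 \<delta>2 :: real
    and C :: "(nat \<times> (nat \<Rightarrow> 'a) set) set"
  assumes "prob_space P1" and "prob_space P2"
    and "sets P1 = sets M" and "sets P2 = sets M"
    and "1/2 < \<delta>1" and "\<delta>1 < 1" and "1/2 < \<delta>2" and "\<delta>2 < 1"
    and "C_class M C"
    and "T_bar P1 \<delta>1 \<union> T_bar P2 \<delta>2 \<subseteq> C"
  shows "P1 = P2"
proof (rule measure_eqI)
  show "sets P1 = sets P2" using assms by simp
  fix A assume A1: "A \<in> sets P1"
  hence A: "A \<in> sets M" using assms by simp
  have "measure P1 A = measure P2 A"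
  proof (rule ccontr)
    assume ne: "measure P1 A \<noteq> measure P2 A"
    show False
    proof (cases "measure P1 A < measure P2 A")
      case True
      show False by (rule sep[OF assms(1-4,6,8-10) A True])
    next
      case False
      hence lt: "measure P2 A < measure P1 A" using ne by linarith
      have sw: "T_bar P2 \<delta>2 \<union> T_bar P1 \<delta>1 \<subseteq> C" using assms(10) by auto
      show False by (rule sep[OF assms(2,1,4,3,8,6,9) sw A lt])
    qed
  qed
  thus "emeasure P1 A = emeasure P2 A"
    using finite_measure.emeasure_eq_measure[OF prob_space.finite_measure[OF assms(1)], of A]
      finite_measure.emeasure_eq_measure[OF prob_space.finite_measure[OF assms(2)], of A]
    by simp
qed

end
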